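(* If $(\mathbf M,\tau)$ is a subdirectly irreducible state BL-algebra, then $\tau(M)$ and $\mathrm{Ker}(\tau)$ are linearly ordered.
   Context: A BL-algebra is an algebra $\mathbf M=(M;\wedge,\vee,\odot,\to,0,1)$ of type $\langle 2,2,2,2,0,0\rangle$ such that $(M;\wedge,\vee,0,1)$ is a bounded lattice, $(M;\odot,1)$ is a commutative monoid, and for all $a,b,c$: $c\le a\to b$ iff $a\odot c\le b$; $a\wedge b=a\odot(a\to b)$; $(a\to b)\vee(b\to a)=1$. A state-operator on $\mathbf M$ is a map $\tau:M\to M$ such that for all $x,y$: $\tau(0)=0$; $\tau(x\to y)=\tau(x)\to\tau(x\wedge y)$; $\tau(x\odot y)=\tau(x)\odot\tau(x\to(x\odot y))$; $\tau(\tau(x)\odot\tau(y))=\tau(x)\odot\tau(y)$; $\tau(\tau(x)\to\tau(y))=\tau(x)\to\tau(y)$; $(\mathbf M,\tau)$ is then a state BL-algebra, regarded as an algebra with the extra unary operation $\tau$, and subdirect irreducibility refers to this algebra. $\mathrm{Ker}(\tau)=\{a\in M:\tau(a)=1\}$. *)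

theory Defs
  imports Main
begin

definition bl_le :: "('a \<Rightarrow> 'a \<Rightarrow> 'a) \<Rightarrow> 'a \<Rightarrow> 'a \<Rightarrow> bool" where
  "bl_le meet x y \<longleftrightarrow> meet x y = x"

definition bl_algebra ::
  "'a set \<Rightarrow> ('a \<Rightarrow> 'a \<Rightarrow> 'a) \<Rightarrow> ('a \<Rightarrow> 'a \<Rightarrow> 'a) \<Rightarrow> ('a \<Rightarrow> 'a \<Rightarrow> 'a)
    \<Rightarrow> ('a \<Rightarrow> 'a \<Rightarrow> 'a) \<Rightarrow> 'a \<Rightarrow> 'a \<Rightarrow> bool" where
  "bl_algebra M meet join mult imp zero one \<longleftrightarrow>
     zero \<in> M \<and> one \<in> M \<and>
     (\<forall>x\<in>M. \<forall>y\<in>M. meet x y \<in> M \<and> join x y \<in> M \<and> mult x y \<in> M \<and> imp x y \<in> M) \<and>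
     \<comment> \<open>bounded lattice\<close>
     (\<forall>x\<in>M. \<forall>y\<in>M. meet x y = meet y x \<and> join x y = join y x) \<and>
     (\<forall>x\<in>M. \<forall>y\<in>M. \<forall>z\<in>M. meet (meet x y) z = meet x (meet y z) \<and>
                              join (join x y) z = join x (join y z)) \<and>
     (\<forall>x\<in>M. \<forall>y\<in>M. meet x (join x y) = x \<and> join x (meet x y) = x) \<and>
     (\<forall>x\<in>M. meet x zero = zero \<and> join x one = one) \<and>
     \<comment> \<open>commutative monoid\<close>
     (\<forall>x\<in>M. \<forall>y\<in>M. \<forall>z\<in>M. mult (mult x y) z = mult x (mult y z)) \<and>
     (\<forall>x\<in>M. \<forall>y\<in>M. mult x y = mult y x) \<and>
     (\<forall>x\<in>M. mult x one = x) \<and>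
     \<comment> \<open>residuation\<close>
     (\<forall>a\<in>M. \<forall>b\<in>M. \<forall>c\<in>M. bl_le meet c (imp a b) \<longleftrightarrow> bl_le meet (mult a c) b) \<and>
     \<comment> \<open>divisibility\<close>
     (\<forall>a\<in>M. \<forall>b\<in>M. meet a b = mult a (imp a b)) \<and>
     \<comment> \<open>prelinearity\<close>
     (\<forall>a\<in>M. \<forall>b\<in>M. join (imp a b) (imp b a) = one)"

definition state_operator ::
  "'a set \<Rightarrow> ('a \<Rightarrow> 'a \<Rightarrow> 'a) \<Rightarrow> ('a \<Rightarrow> 'a \<Rightarrow> 'a) \<Rightarrow> ('a \<Rightarrow> 'a \<Rightarrow> 'a)
    \<Rightarrow> 'a \<Rightarrow> ('a \<Rightarrow> 'a) \<Rightarrow> bool" where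
  "state_operator M meet mult imp zero \<tau> \<longleftrightarrow>
     (\<forall>x\<in>M. \<tau> x \<in> M) \<and>
     \<tau> zero = zero \<and>
     (\<forall>x\<in>M. \<forall>y\<in>M. \<tau> (imp x y) = imp (\<tau> x) (\<tau> (meet x y))) \<and>
     (\<forall>x\<in>M. \<forall>y\<in>M. \<tau> (mult x y) = mult (\<tau> x) (\<tau> (imp x (mult x y)))) \<and>
     (\<forall>x\<in>M. \<forall>y\<in>M. \<tau> (mult (\<tau> x) (\<tau> y)) = mult (\<tau> x) (\<tau> y)) \<and>
     (\<forall>x\<in>M. \<forall>y\<in>M. \<tau> (imp (\<tau> x) (\<tau> y)) = imp (\<tau> x) (\<tau> y))"

definition state_bl_algebra ::
  "'a set \<Rightarrow> ('a \<Rightarrow> 'a \<Rightarrow> 'a) \<Rightarrow> ('a \<Rightarrow> 'a \<Rightarrow> 'a) \<Rightarrow> ('a \<Rightarrow> 'a \<Rightarrow> 'a)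
    \<Rightarrow> ('a \<Rightarrow> 'a \<Rightarrow> 'a) \<Rightarrow> 'a \<Rightarrow> 'a \<Rightarrow> ('a \<Rightarrow> 'a) \<Rightarrow> bool" where
  "state_bl_algebra M meet join mult imp zero one \<tau> \<longleftrightarrow>
     bl_algebra M meet join mult imp zero one \<and> state_operator M meet mult imp zero \<tau>"

definition sbl_congruence ::
  "'a set \<Rightarrow> ('a \<Rightarrow> 'a \<Rightarrow> 'a) \<Rightarrow> ('a \<Rightarrow> 'a \<Rightarrow> 'a) \<Rightarrow> ('a \<Rightarrow> 'a \<Rightarrow> 'a)
    \<Rightarrow> ('a \<Rightarrow> 'a \<Rightarrow> 'a) \<Rightarrow> ('a \<Rightarrow> 'a) \<Rightarrow> ('a \<times> 'a) set \<Rightarrow> bool" where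
  "sbl_congruence M meet join mult imp \<tau> \<theta> \<longleftrightarrow>
     equiv M \<theta> \<and>
     (\<forall>a b c d. (a, b) \<in> \<theta> \<longrightarrow> (c, d) \<in> \<theta> \<longrightarrow>
        (meet a c, meet b d) \<in> \<theta> \<and> (join a c, join b d) \<in> \<theta> \<and>
        (mult a c, mult b d) \<in> \<theta> \<and> (imp a c, imp b d) \<in> \<theta>) \<and>
     (\<forall>a b. (a, b) \<in> \<theta> \<longrightarrow> (\<tau> a, \<tau> b) \<in> \<theta>)"

text \<open>Subdirectly irreducible: there are distinct a, b such that (a,b) lies in every
  congruence other than the identity (equivalently: |M| > 1 and the intersection of all
  nontrivial congruences is not the identity, i.e. a monolith exists).\<close>
definition sbl_subdirectly_irreducible ::
  "'a set \<Rightarrow> ('a \<Rightarrow> 'a \<Rightarrow> 'a) \<Rightarrow> ('a \<Rightarrow> 'a \<Rightarrow> 'a) \<Rightarrow> ('a \<Rightarrow> 'a \<Rightarrow> 'a)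
    \<Rightarrow> ('a \<Rightarrow> 'a \<Rightarrow> 'a) \<Rightarrow> ('a \<Rightarrow> 'a) \<Rightarrow> bool" where
  "sbl_subdirectly_irreducible M meet join mult imp \<tau> \<longleftrightarrow>
     (\<exists>a\<in>M. \<exists>b\<in>M. a \<noteq> b \<and>
        (\<forall>\<theta>. sbl_congruence M meet join mult imp \<tau> \<theta> \<and> \<theta> \<noteq> Id_on M \<longrightarrow> (a, b) \<in> \<theta>))"

definition state_kernel :: "'a set \<Rightarrow> 'a \<Rightarrow> ('a \<Rightarrow> 'a) \<Rightarrow> 'a set" where
  "state_kernel M one \<tau> = {a \<in> M. \<tau> a = one}"

definition linearly_ordered_subset :: "('a \<Rightarrow> 'a \<Rightarrow> 'a) \<Rightarrow> 'a set \<Rightarrow> bool" where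
  "linearly_ordered_subset meet S \<longleftrightarrow> (\<forall>x\<in>S. \<forall>y\<in>S. bl_le meet x y \<or> bl_le meet y x)"

end

theory Submission
  imports Defs
begin

primrec pw :: "('a \<Rightarrow> 'a \<Rightarrow> 'a) \<Rightarrow> 'a \<Rightarrow> 'a \<Rightarrow> nat \<Rightarrow> 'a" where
  "pw mult one a 0 = one"
| "pw mult one a (Suc n) = mult a (pw mult one a n)"

locale sbl =
  fixes M meet join mult imp zero one \<tau>
  assumes S: "state_bl_algebra M meet join mult imp zero one \<tau>"
begin

abbreviation le where "le x y \<equiv> bl_le meet x y"
abbreviation p where "p a n \<equiv> pw mult one a n"

lemma BL: "bl_algebra M meet join mult imp zero one" using S by (simp add: state_bl_algebra_def)
lemma ST: "state_operator M meet mult imp zero \<tau>" using S by (simp add: state_bl_algebra_def)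

lemma BLc0: "zero \<in> M"
  using BL unfolding bl_algebra_def by (elim conjE) assumption

lemma BLc1: "one \<in> M"
  using BL unfolding bl_algebra_def by (elim conjE) assumption

lemma BLc2: "\<forall>x\<in>M. \<forall>y\<in>M. meet x y \<in> M \<and> join x y \<in> M \<and> mult x y \<in> M \<and> imp x y \<in> M"
  using BL unfolding bl_algebra_def by (elim conjE) assumption

lemma BLc3: "\<forall>x\<in>M. \<forall>y\<in>M. meet x y = meet y x \<and> join x y = join y x"
  using BL unfolding bl_algebra_def by (elim conjE) assumption

lemma BLc4: "\<forall>x\<in>M. \<forall>y\<in>M. \<forall>z\<in>M. meet (meet x y) z = meet x (meet y z) \<and> join (join x y) z = join x (join y z)"
  using BL unfolding bl_algebra_def by (elim conjE) assumption

lemma BLc5: "\<forall>x\<in>M. \<forall>y\<in>M. meet x (join x y) = x \<and> join x (meet x y) = x"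
  using BL unfolding bl_algebra_def by (elim conjE) assumption

lemma BLc6: "\<forall>x\<in>M. meet x zero = zero \<and> join x one = one"
  using BL unfolding bl_algebra_def by (elim conjE) assumption

lemma BLc7: "\<forall>x\<in>M. \<forall>y\<in>M. \<forall>z\<in>M. mult (mult x y) z = mult x (mult y z)"
  using BL unfolding bl_algebra_def by (elim conjE) assumption

lemma BLc8: "\<forall>x\<in>M. \<forall>y\<in>M. mult x y = mult y x"
  using BL unfolding bl_algebra_def by (elim conjE) assumption

lemma BLc9: "\<forall>x\<in>M. mult x one = x"
  using BL unfolding bl_algebra_def by (elim conjE) assumption

lemma BLc10: "\<forall>a\<in>M. \<forall>b\<in>M. \<forall>c\<in>M. bl_le meet c (imp a b) \<longleftrightarrow> bl_le meet (mult a c) b"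
  using BL unfolding bl_algebra_def by (elim conjE) assumption

lemma BLc11: "\<forall>a\<in>M. \<forall>b\<in>M. meet a b = mult a (imp a b)"
  using BL unfolding bl_algebra_def by (elim conjE) assumption

lemma BLc12: "\<forall>a\<in>M. \<forall>b\<in>M. join (imp a b) (imp b a) = one"
  using BL unfolding bl_algebra_def by (elim conjE) assumption


lemma STc0: "\<forall>x\<in>M. \<tau> x \<in> M"
  using ST unfolding state_operator_def by (elim conjE) assumption

lemma STc1: "\<tau> zero = zero"
  using ST unfolding state_operator_def by (elim conjE) assumption

lemma STc2: "\<forall>x\<in>M. \<forall>y\<in>M. \<tau> (imp x y) = imp (\<tau> x) (\<tau> (meet x y))"
  using ST unfolding state_operator_def by (elim conjE) assumption

lemma STc3: "\<forall>x\<in>M. \<forall>y\<in>M. \<tau> (mult x y) = mult (\<tau> x) (\<tau> (imp x (mult x y)))"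
  using ST unfolding state_operator_def by (elim conjE) assumption

lemma STc4: "\<forall>x\<in>M. \<forall>y\<in>M. \<tau> (mult (\<tau> x) (\<tau> y)) = mult (\<tau> x) (\<tau> y)"
  using ST unfolding state_operator_def by (elim conjE) assumption

lemma STc5: "\<forall>x\<in>M. \<forall>y\<in>M. \<tau> (imp (\<tau> x) (\<tau> y)) = imp (\<tau> x) (\<tau> y)"
  using ST unfolding state_operator_def by (elim conjE) assumption


lemma zero_in[simp]: "zero \<in> M" using BLc0 BLc1 BLc2 BLc3 BLc4 BLc5 BLc6 BLc7 BLc8 BLc9 BLc10 BLc11 BLc12 by auto
lemma one_in[simp]: "one \<in> M" using BLc0 BLc1 BLc2 BLc3 BLc4 BLc5 BLc6 BLc7 BLc8 BLc9 BLc10 BLc11 BLc12 by auto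
lemma meet_in[simp]: "x \<in> M \<Longrightarrow> y \<in> M \<Longrightarrow> meet x y \<in> M" using BLc0 BLc1 BLc2 BLc3 BLc4 BLc5 BLc6 BLc7 BLc8 BLc9 BLc10 BLc11 BLc12 by auto
lemma join_in[simp]: "x \<in> M \<Longrightarrow> y \<in> M \<Longrightarrow> join x y \<in> M" using BLc0 BLc1 BLc2 BLc3 BLc4 BLc5 BLc6 BLc7 BLc8 BLc9 BLc10 BLc11 BLc12 by auto
lemma mult_in[simp]: "x \<in> M \<Longrightarrow> y \<in> M \<Longrightarrow> mult x y \<in> M" using BLc0 BLc1 BLc2 BLc3 BLc4 BLc5 BLc6 BLc7 BLc8 BLc9 BLc10 BLc11 BLc12 by auto
lemma imp_in[simp]: "x \<in> M \<Longrightarrow> y \<in> M \<Longrightarrow> imp x y \<in> M" using BLc0 BLc1 BLc2 BLc3 BLc4 BLc5 BLc6 BLc7 BLc8 BLc9 BLc10 BLc11 BLc12 by auto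
lemma tau_in[simp]: "x \<in> M \<Longrightarrow> \<tau> x \<in> M" using STc0 STc1 STc2 STc3 STc4 STc5 by auto
lemma meet_comm: "x \<in> M \<Longrightarrow> y \<in> M \<Longrightarrow> meet x y = meet y x" using BLc0 BLc1 BLc2 BLc3 BLc4 BLc5 BLc6 BLc7 BLc8 BLc9 BLc10 BLc11 BLc12 by auto
lemma join_comm: "x \<in> M \<Longrightarrow> y \<in> M \<Longrightarrow> join x y = join y x" using BLc0 BLc1 BLc2 BLc3 BLc4 BLc5 BLc6 BLc7 BLc8 BLc9 BLc10 BLc11 BLc12 by auto
lemma meet_assoc: "x \<in> M \<Longrightarrow> y \<in> M \<Longrightarrow> z \<in> M \<Longrightarrow> meet (meet x y) z = meet x (meet y z)" using BLc0 BLc1 BLc2 BLc3 BLc4 BLc5 BLc6 BLc7 BLc8 BLc9 BLc10 BLc11 BLc12 by auto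
lemma join_assoc: "x \<in> M \<Longrightarrow> y \<in> M \<Longrightarrow> z \<in> M \<Longrightarrow> join (join x y) z = join x (join y z)" using BLc0 BLc1 BLc2 BLc3 BLc4 BLc5 BLc6 BLc7 BLc8 BLc9 BLc10 BLc11 BLc12 by auto
lemma absorb1: "x \<in> M \<Longrightarrow> y \<in> M \<Longrightarrow> meet x (join x y) = x" using BLc0 BLc1 BLc2 BLc3 BLc4 BLc5 BLc6 BLc7 BLc8 BLc9 BLc10 BLc11 BLc12 by auto
lemma absorb2: "x \<in> M \<Longrightarrow> y \<in> M \<Longrightarrow> join x (meet x y) = x" using BLc0 BLc1 BLc2 BLc3 BLc4 BLc5 BLc6 BLc7 BLc8 BLc9 BLc10 BLc11 BLc12 by auto
lemma meet_zero: "x \<in> M \<Longrightarrow> meet x zero = zero" using BLc0 BLc1 BLc2 BLc3 BLc4 BLc5 BLc6 BLc7 BLc8 BLc9 BLc10 BLc11 BLc12 by auto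
lemma join_one: "x \<in> M \<Longrightarrow> join x one = one" using BLc0 BLc1 BLc2 BLc3 BLc4 BLc5 BLc6 BLc7 BLc8 BLc9 BLc10 BLc11 BLc12 by auto
lemma mult_assoc: "x \<in> M \<Longrightarrow> y \<in> M \<Longrightarrow> z \<in> M \<Longrightarrow> mult (mult x y) z = mult x (mult y z)" using BLc0 BLc1 BLc2 BLc3 BLc4 BLc5 BLc6 BLc7 BLc8 BLc9 BLc10 BLc11 BLc12 by auto
lemma mult_comm: "x \<in> M \<Longrightarrow> y \<in> M \<Longrightarrow> mult x y = mult y x" using BLc0 BLc1 BLc2 BLc3 BLc4 BLc5 BLc6 BLc7 BLc8 BLc9 BLc10 BLc11 BLc12 by auto
lemma mult_one: "x \<in> M \<Longrightarrow> mult x one = x" using BLc0 BLc1 BLc2 BLc3 BLc4 BLc5 BLc6 BLc7 BLc8 BLc9 BLc10 BLc11 BLc12 by auto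
lemma resid: "a \<in> M \<Longrightarrow> b \<in> M \<Longrightarrow> c \<in> M \<Longrightarrow> le c (imp a b) \<longleftrightarrow> le (mult a c) b" using BLc0 BLc1 BLc2 BLc3 BLc4 BLc5 BLc6 BLc7 BLc8 BLc9 BLc10 BLc11 BLc12 by auto
lemma divis: "a \<in> M \<Longrightarrow> b \<in> M \<Longrightarrow> meet a b = mult a (imp a b)" using BLc0 BLc1 BLc2 BLc3 BLc4 BLc5 BLc6 BLc7 BLc8 BLc9 BLc10 BLc11 BLc12 by auto
lemma prelin: "a \<in> M \<Longrightarrow> b \<in> M \<Longrightarrow> join (imp a b) (imp b a) = one" using BLc0 BLc1 BLc2 BLc3 BLc4 BLc5 BLc6 BLc7 BLc8 BLc9 BLc10 BLc11 BLc12 by auto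

lemma tau_zero: "\<tau> zero = zero" using STc0 STc1 STc2 STc3 STc4 STc5 by auto
lemma tau_imp_ax: "x \<in> M \<Longrightarrow> y \<in> M \<Longrightarrow> \<tau> (imp x y) = imp (\<tau> x) (\<tau> (meet x y))" using STc0 STc1 STc2 STc3 STc4 STc5 by auto
lemma tau_mult_ax: "x \<in> M \<Longrightarrow> y \<in> M \<Longrightarrow> \<tau> (mult x y) = mult (\<tau> x) (\<tau> (imp x (mult x y)))" using STc0 STc1 STc2 STc3 STc4 STc5 by auto
lemma tau_mm: "x \<in> M \<Longrightarrow> y \<in> M \<Longrightarrow> \<tau> (mult (\<tau> x) (\<tau> y)) = mult (\<tau> x) (\<tau> y)" using STc0 STc1 STc2 STc3 STc4 STc5 by auto
lemma tau_ii: "x \<in> M \<Longrightarrow> y \<in> M \<Longrightarrow> \<tau> (imp (\<tau> x) (\<tau> y)) = imp (\<tau> x) (\<tau> y)" using STc0 STc1 STc2 STc3 STc4 STc5 by auto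

lemma meet_idem: "x \<in> M \<Longrightarrow> meet x x = x"
  by (metis absorb1 absorb2 meet_in)

lemma le_refl: "x \<in> M \<Longrightarrow> le x x" by (simp add: bl_le_def meet_idem)
lemma le_trans: "x \<in> M \<Longrightarrow> y \<in> M \<Longrightarrow> z \<in> M \<Longrightarrow> le x y \<Longrightarrow> le y z \<Longrightarrow> le x z"
  unfolding bl_le_def by (metis meet_assoc)
lemma le_antisym: "x \<in> M \<Longrightarrow> y \<in> M \<Longrightarrow> le x y \<Longrightarrow> le y x \<Longrightarrow> x = y"
  unfolding bl_le_def by (metis meet_comm)
lemma le_join_iff: "x \<in> M \<Longrightarrow> y \<in> M \<Longrightarrow> le x y \<longleftrightarrow> join x y = y"
  unfolding bl_le_def by (metis absorb1 absorb2 meet_comm join_comm)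
lemma le_one: "x \<in> M \<Longrightarrow> le x one" using le_join_iff join_one by simp
lemma zero_le: "x \<in> M \<Longrightarrow> le zero x" unfolding bl_le_def by (metis meet_comm meet_zero zero_in)
lemma meet_le1: "x \<in> M \<Longrightarrow> y \<in> M \<Longrightarrow> le (meet x y) x"
  unfolding bl_le_def by (metis meet_assoc meet_comm meet_idem)
lemma meet_le2: "x \<in> M \<Longrightarrow> y \<in> M \<Longrightarrow> le (meet x y) y"
  unfolding bl_le_def by (metis meet_assoc meet_idem)
lemma meet_glb: "x \<in> M \<Longrightarrow> y \<in> M \<Longrightarrow> z \<in> M \<Longrightarrow> le z x \<Longrightarrow> le z y \<Longrightarrow> le z (meet x y)"
  unfolding bl_le_def by (metis meet_assoc)
lemma join_ge1: "x \<in> M \<Longrightarrow> y \<in> M \<Longrightarrow> le x (join x y)"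
  unfolding bl_le_def by (simp add: absorb1)
lemma join_ge2: "x \<in> M \<Longrightarrow> y \<in> M \<Longrightarrow> le y (join x y)"
  using join_ge1 join_comm by metis
lemma join_lub: "x \<in> M \<Longrightarrow> y \<in> M \<Longrightarrow> z \<in> M \<Longrightarrow> le x z \<Longrightarrow> le y z \<Longrightarrow> le (join x y) z"
  by (simp add: le_join_iff join_assoc)

lemma imp_one_iff: "x \<in> M \<Longrightarrow> y \<in> M \<Longrightarrow> le x y \<longleftrightarrow> imp x y = one"
proof -
  assume xy: "x \<in> M" "y \<in> M"
  have "le one (imp x y) \<longleftrightarrow> le x y" using resid[of x y one] xy by (simp add: mult_one)
  moreover have "le (imp x y) one" using xy le_one by simp
  ultimately show ?thesis using le_antisym[of "imp x y" one] xy le_refl by auto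
qed

lemma mp: "x \<in> M \<Longrightarrow> y \<in> M \<Longrightarrow> le (mult x (imp x y)) y"
  using resid[of x y "imp x y"] le_refl by simp

lemma mult_mono1: "x \<in> M \<Longrightarrow> y \<in> M \<Longrightarrow> z \<in> M \<Longrightarrow> le x y \<Longrightarrow> le (mult x z) (mult y z)"
proof -
  assume A: "x \<in> M" "y \<in> M" "z \<in> M" "le x y"
  have c1: "mult z y = mult y z" using A mult_comm by metis
  have c2: "mult z x = mult x z" using A mult_comm by metis
  have "le (mult z y) (mult y z)" using c1 A le_refl by simp
  hence "le y (imp z (mult y z))" using resid[of z "mult y z" y] A by simp
  hence "le x (imp z (mult y z))" using le_trans[of x y "imp z (mult y z)"] A by simp
  hence "le (mult z x) (mult y z)" using resid[of z "mult y z" x] A by simp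
  thus ?thesis using c2 by simp
qed

lemma mult_mono2: "x \<in> M \<Longrightarrow> y \<in> M \<Longrightarrow> z \<in> M \<Longrightarrow> le x y \<Longrightarrow> le (mult z x) (mult z y)"
  using mult_mono1 mult_comm by metis

lemma mult_mono: "x \<in> M \<Longrightarrow> y \<in> M \<Longrightarrow> u \<in> M \<Longrightarrow> v \<in> M \<Longrightarrow> le x y \<Longrightarrow> le u v \<Longrightarrow> le (mult x u) (mult y v)"
proof -
  assume A: "x \<in> M" "y \<in> M" "u \<in> M" "v \<in> M" "le x y" "le u v"
  have "le (mult x u) (mult y u)" using A mult_mono1 by simp
  moreover have "le (mult y u) (mult y v)" using A mult_mono2 by simp
  ultimately show ?thesis using A le_trans[of "mult x u" "mult y u" "mult y v"] by simp
qed

lemma mult_le: "x \<in> M \<Longrightarrow> y \<in> M \<Longrightarrow> le (mult x y) x"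
  using mult_mono2[of y one x] le_one mult_one by simp

lemma mult_le2: "x \<in> M \<Longrightarrow> y \<in> M \<Longrightarrow> le (mult x y) y"
  using mult_le mult_comm by metis

lemma imp_mono2: "x \<in> M \<Longrightarrow> y \<in> M \<Longrightarrow> z \<in> M \<Longrightarrow> le x y \<Longrightarrow> le (imp z x) (imp z y)"
proof -
  assume A: "x \<in> M" "y \<in> M" "z \<in> M" "le x y"
  have "le (mult z (imp z x)) x" using A mp by simp
  hence "le (mult z (imp z x)) y" using A le_trans[of "mult z (imp z x)" x y] by simp
  thus ?thesis using A resid by simp
qed

lemma imp_trans: "x \<in> M \<Longrightarrow> y \<in> M \<Longrightarrow> z \<in> M \<Longrightarrow> le (mult (imp x y) (imp y z)) (imp x z)"
proof -
  assume A: "x \<in> M" "y \<in> M" "z \<in> M"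
  have "mult x (mult (imp x y) (imp y z)) = mult (mult x (imp x y)) (imp y z)"
    using A mult_assoc by simp
  moreover have "le (mult (mult x (imp x y)) (imp y z)) (mult y (imp y z))"
    using A mult_mono1 mp by simp
  moreover have "le (mult y (imp y z)) z" using A mp by simp
  ultimately have "le (mult x (mult (imp x y) (imp y z))) z"
    using A le_trans[of _ "mult y (imp y z)" z] by simp
  thus ?thesis using A resid by simp
qed

lemma le_imp: "x \<in> M \<Longrightarrow> y \<in> M \<Longrightarrow> le y (imp x y)"
  using resid mult_le2 by simp

lemma imp_self: "x \<in> M \<Longrightarrow> imp x x = one"
  using imp_one_iff le_refl by simp

lemma imp_to_one: "x \<in> M \<Longrightarrow> imp x one = one"
  using imp_one_iff le_one by simp

lemma one_imp: "x \<in> M \<Longrightarrow> imp one x = x"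
proof -
  assume A: "x \<in> M"
  have "mult one (imp one x) = imp one x" using A mult_comm[of one "imp one x"] mult_one by simp
  hence "le (imp one x) x" using mp[of one x] A by simp
  moreover have "le x (imp one x)" using A le_imp by simp
  ultimately show ?thesis using A le_antisym by simp
qed

lemma join_mult: "x \<in> M \<Longrightarrow> y \<in> M \<Longrightarrow> z \<in> M \<Longrightarrow> le (mult (join x y) (join x z)) (join x (mult y z))"
proof -
  assume A: "x \<in> M" "y \<in> M" "z \<in> M"
  define J where "J = join x (mult y z)"
  have J: "J \<in> M" using A J_def by simp
  have xJ: "le x J" using A J_def join_ge1 by simp
  have yzJ: "le (mult y z) J" using A J_def join_ge2 by simp
  have "le (join x y) (imp (join x z) J)"
  proof (rule join_lub)
    have "le (mult (join x z) x) x" using mult_le2 A by simp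
    hence "le (mult (join x z) x) J" using xJ le_trans[of "mult (join x z) x" x J] A J by simp
    thus "le x (imp (join x z) J)" using resid A J by simp
    have "le (join x z) (imp y J)"
    proof (rule join_lub)
      have "le (mult y x) x" using mult_le2 A by simp
      hence "le (mult y x) J" using xJ le_trans[of "mult y x" x J] A J by simp
      thus "le x (imp y J)" using resid A J by simp
      show "le z (imp y J)" using resid A J yzJ by simp
    qed (use A J in auto)
    hence "le (mult y (join x z)) J" using resid A J by simp
    moreover have "mult y (join x z) = mult (join x z) y" using mult_comm A by (metis join_in)
    ultimately have "le (mult (join x z) y) J" by simp
    thus "le y (imp (join x z) J)" using resid A J by simp
  qed (use A J in auto)
  hence "le (mult (join x z) (join x y)) J" using resid A J by simp
  moreover have "mult (join x z) (join x y) = mult (join x y) (join x z)" using mult_comm A by (metis join_in)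
  ultimately show ?thesis using J_def by simp
qed

lemma tau_one: "\<tau> one = one"
proof -
  have "imp zero zero = one" using imp_self by simp
  hence "\<tau> one = imp (\<tau> zero) (\<tau> (meet zero zero))" using tau_imp_ax[of zero zero] by simp
  thus ?thesis using tau_zero meet_idem imp_self by simp
qed

lemma tau_mono: "x \<in> M \<Longrightarrow> y \<in> M \<Longrightarrow> le x y \<Longrightarrow> le (\<tau> x) (\<tau> y)"
proof -
  assume A: "x \<in> M" "y \<in> M" "le x y"
  have m: "meet x y = x" using A(3) unfolding bl_le_def .
  have "meet y x = x" using m meet_comm[OF A(1,2)] by simp
  hence e: "x = mult y (imp y x)" using divis[OF A(2,1)] by simp
  have "\<tau> (mult y (imp y x)) = mult (\<tau> y) (\<tau> (imp y (mult y (imp y x))))"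
    using tau_mult_ax A by simp
  hence "le (\<tau> (mult y (imp y x))) (\<tau> y)" using mult_le A by simp
  thus ?thesis using e by simp
qed

lemma tau_imp: "x \<in> M \<Longrightarrow> y \<in> M \<Longrightarrow> le (\<tau> (imp x y)) (imp (\<tau> x) (\<tau> y))"
proof -
  assume A: "x \<in> M" "y \<in> M"
  have "le (\<tau> (meet x y)) (\<tau> y)" using A tau_mono meet_le2 by simp
  hence "le (imp (\<tau> x) (\<tau> (meet x y))) (imp (\<tau> x) (\<tau> y))" using A imp_mono2 by simp
  thus ?thesis using A tau_imp_ax by simp
qed


lemma pw_in[simp]: "a \<in> M \<Longrightarrow> p a n \<in> M"
  by (induction n) auto

lemma pw_add: "a \<in> M \<Longrightarrow> p a (n + m) = mult (p a n) (p a m)"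
proof (induction n)
  case 0
  then show ?case using mult_comm[of one "p a m"] mult_one by simp
next
  case (Suc n)
  then show ?case using mult_assoc[of a "p a n" "p a m"] by simp
qed

lemma join_pw: "a \<in> M \<Longrightarrow> b \<in> M \<Longrightarrow> join a b = one \<Longrightarrow> join a (p b m) = one"
proof (induction m)
  case 0
  then show ?case using join_one by simp
next
  case (Suc m)
  have ab: "a \<in> M" "b \<in> M" "join a b = one" using Suc.prems by auto
  have IH: "join a (p b m) = one" using Suc.IH ab by simp
  have "le (mult (join a b) (join a (p b m))) (join a (mult b (p b m)))"
    using join_mult[of a b "p b m"] ab by simp
  hence "le one (join a (p b (Suc m)))" using ab IH mult_one by simp
  moreover have "le (join a (p b (Suc m))) one" using ab le_one by simp
  ultimately show ?case using le_antisym[of "join a (p b (Suc m))" one] ab by simp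
qed

lemma join_pw2: "a \<in> M \<Longrightarrow> b \<in> M \<Longrightarrow> join a b = one \<Longrightarrow> join (p a n) (p b m) = one"
proof -
  assume A: "a \<in> M" "b \<in> M" "join a b = one"
  have "join a (p b m) = one" using A join_pw by simp
  hence "join (p b m) a = one" using A join_comm[of a "p b m"] by simp
  hence "join (p b m) (p a n) = one" using A join_pw by simp
  thus ?thesis using A join_comm[of "p a n" "p b m"] by simp
qed

definition Fa :: "'a \<Rightarrow> 'a \<Rightarrow> bool" where
  "Fa a u \<longleftrightarrow> (\<exists>n. le (p a n) u)"

definition th :: "'a \<Rightarrow> ('a \<times> 'a) set" where
  "th a = {(x, y). x \<in> M \<and> y \<in> M \<and> Fa a (imp x y) \<and> Fa a (imp y x)}"

lemma Fa_mono: "a \<in> M \<Longrightarrow> u \<in> M \<Longrightarrow> t \<in> M \<Longrightarrow> Fa a u \<Longrightarrow> le u t \<Longrightarrow> Fa a t"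
proof -
  assume A: "a \<in> M" "u \<in> M" "t \<in> M" "Fa a u" "le u t"
  then obtain n where "le (p a n) u" unfolding Fa_def by blast
  hence "le (p a n) t" using le_trans[of "p a n" u t] A by simp
  thus ?thesis unfolding Fa_def by blast
qed

lemma Fa_mult: "a \<in> M \<Longrightarrow> u \<in> M \<Longrightarrow> v \<in> M \<Longrightarrow> Fa a u \<Longrightarrow> Fa a v \<Longrightarrow> Fa a (mult u v)"
proof -
  assume A: "a \<in> M" "u \<in> M" "v \<in> M" "Fa a u" "Fa a v"
  then obtain n m where "le (p a n) u" "le (p a m) v" unfolding Fa_def by blast
  hence "le (mult (p a n) (p a m)) (mult u v)" using A mult_mono by simp
  hence "le (p a (n + m)) (mult u v)" using A pw_add by simp
  thus ?thesis unfolding Fa_def by blast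
qed

lemma Fa_chain: "a \<in> M \<Longrightarrow> u \<in> M \<Longrightarrow> v \<in> M \<Longrightarrow> X \<in> M \<Longrightarrow> Y \<in> M \<Longrightarrow> Z \<in> M \<Longrightarrow>
   Fa a u \<Longrightarrow> le u (imp X Y) \<Longrightarrow> Fa a v \<Longrightarrow> le v (imp Y Z) \<Longrightarrow> Fa a (imp X Z)"
proof -
  assume A: "a \<in> M" "u \<in> M" "v \<in> M" "X \<in> M" "Y \<in> M" "Z \<in> M"
     "Fa a u" "le u (imp X Y)" "Fa a v" "le v (imp Y Z)"
  have "Fa a (imp X Y)" using A Fa_mono[of a u "imp X Y"] by simp
  moreover have "Fa a (imp Y Z)" using A Fa_mono[of a v "imp Y Z"] by simp
  ultimately have "Fa a (mult (imp X Y) (imp Y Z))" using A Fa_mult[of a "imp X Y" "imp Y Z"] by simp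
  moreover have "le (mult (imp X Y) (imp Y Z)) (imp X Z)" using A imp_trans by simp
  ultimately show ?thesis using A Fa_mono[of a "mult (imp X Y) (imp Y Z)" "imp X Z"] by simp
qed

lemma meet_imp: "x \<in> M \<Longrightarrow> y \<in> M \<Longrightarrow> z \<in> M \<Longrightarrow> le (imp x y) (imp (meet x z) (meet y z))"
proof -
  assume A: "x \<in> M" "y \<in> M" "z \<in> M"
  have "le (mult (meet x z) (imp x y)) (mult x (imp x y))" using A mult_mono1 meet_le1 by simp
  hence 1: "le (mult (meet x z) (imp x y)) y" using A mp[of x y] le_trans[of "mult (meet x z) (imp x y)" "mult x (imp x y)" y] by simp
  have "le (mult (meet x z) (imp x y)) (meet x z)" using A mult_le by simp
  hence 2: "le (mult (meet x z) (imp x y)) z" using A meet_le2[of x z] le_trans[of "mult (meet x z) (imp x y)" "meet x z" z] by simp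
  show ?thesis using 1 2 A meet_glb resid by simp
qed

lemma meet_imp2: "x \<in> M \<Longrightarrow> y \<in> M \<Longrightarrow> z \<in> M \<Longrightarrow> le (imp x y) (imp (meet z x) (meet z y))"
  using meet_imp meet_comm by metis

lemma join_imp: "x \<in> M \<Longrightarrow> y \<in> M \<Longrightarrow> z \<in> M \<Longrightarrow> le (imp x y) (imp (join x z) (join y z))"
proof -
  assume A: "x \<in> M" "y \<in> M" "z \<in> M"
  have "le (mult x (imp x y)) (join y z)" using A mp[of x y] join_ge1[of y z] le_trans[of "mult x (imp x y)" y "join y z"] by simp
  moreover have "mult x (imp x y) = mult (imp x y) x" using A mult_comm[of x "imp x y"] by simp
  ultimately have 1: "le x (imp (imp x y) (join y z))" using A resid by simp
  have "le (mult (imp x y) z) (join y z)" using A mult_le2[of "imp x y" z] join_ge2[of y z] le_trans[of "mult (imp x y) z" z "join y z"] by simp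
  hence 2: "le z (imp (imp x y) (join y z))" using A resid by simp
  have "le (join x z) (imp (imp x y) (join y z))" using 1 2 A join_lub by simp
  hence "le (mult (imp x y) (join x z)) (join y z)" using A resid by simp
  moreover have "mult (imp x y) (join x z) = mult (join x z) (imp x y)" using A mult_comm[of "imp x y" "join x z"] by simp
  ultimately have "le (mult (join x z) (imp x y)) (join y z)" by simp
  thus ?thesis using A resid by simp
qed

lemma join_imp2: "x \<in> M \<Longrightarrow> y \<in> M \<Longrightarrow> z \<in> M \<Longrightarrow> le (imp x y) (imp (join z x) (join z y))"
  using join_imp join_comm by metis

lemma mult_imp: "x \<in> M \<Longrightarrow> y \<in> M \<Longrightarrow> z \<in> M \<Longrightarrow> le (imp x y) (imp (mult x z) (mult y z))"
proof -
  assume A: "x \<in> M" "y \<in> M" "z \<in> M"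
  have "mult (mult x z) (imp x y) = mult (mult x (imp x y)) z"
    using A mult_assoc[of x z "imp x y"] mult_assoc[of x "imp x y" z] mult_comm[of z "imp x y"] by simp
  moreover have "le (mult (mult x (imp x y)) z) (mult y z)" using A mult_mono1 mp by simp
  ultimately show ?thesis using A resid by simp
qed

lemma mult_imp2: "x \<in> M \<Longrightarrow> y \<in> M \<Longrightarrow> z \<in> M \<Longrightarrow> le (imp x y) (imp (mult z x) (mult z y))"
  using mult_imp mult_comm by metis

lemma imp_imp1: "x \<in> M \<Longrightarrow> y \<in> M \<Longrightarrow> z \<in> M \<Longrightarrow> le (imp y x) (imp (imp x z) (imp y z))"
proof -
  assume A: "x \<in> M" "y \<in> M" "z \<in> M"
  have "le (mult (imp y x) (imp x z)) (imp y z)" using A imp_trans[of y x z] by simp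
  moreover have "mult (imp y x) (imp x z) = mult (imp x z) (imp y x)" using A mult_comm[of "imp y x" "imp x z"] by simp
  ultimately have "le (mult (imp x z) (imp y x)) (imp y z)" by simp
  thus ?thesis using A resid[of "imp x z" "imp y z" "imp y x"] by simp
qed

lemma imp_imp2: "y \<in> M \<Longrightarrow> z \<in> M \<Longrightarrow> w \<in> M \<Longrightarrow> le (imp z w) (imp (imp y z) (imp y w))"
proof -
  assume A: "y \<in> M" "z \<in> M" "w \<in> M"
  have "le (mult (imp y z) (imp z w)) (imp y w)" using A imp_trans[of y z w] by simp
  thus ?thesis using A resid[of "imp y z" "imp y w" "imp z w"] by simp
qed

lemma th_cong:
  assumes a: "a \<in> M" and H: "\<And>n. le (p a n) (\<tau> (p a n))"
  shows "sbl_congruence M meet join mult imp \<tau> (th a)"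
proof -
  have "le (p a 0) one" using a le_one by simp
  hence one: "Fa a one" unfolding Fa_def by blast
  have sub: "th a \<subseteq> M \<times> M" unfolding th_def by auto
  have refl: "refl_on M (th a)" unfolding refl_on_def th_def using sub imp_self one by auto
  have sym: "sym (th a)" unfolding sym_def th_def by auto
  have trans: "trans (th a)"
  proof (rule transI)
    fix x y z assume "(x, y) \<in> th a" "(y, z) \<in> th a"
    hence A: "x \<in> M" "y \<in> M" "z \<in> M" "Fa a (imp x y)" "Fa a (imp y x)" "Fa a (imp y z)" "Fa a (imp z y)"
      unfolding th_def by auto
    have "Fa a (imp x z)" using Fa_chain[of a "imp x y" "imp y z" x y z] A a le_refl by simp
    moreover have "Fa a (imp z x)" using Fa_chain[of a "imp z y" "imp y x" z y x] A a le_refl by simp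
    ultimately show "(x, z) \<in> th a" unfolding th_def using A by auto
  qed
  have ops: "(meet x z, meet y w) \<in> th a \<and> (join x z, join y w) \<in> th a \<and>
        (mult x z, mult y w) \<in> th a \<and> (imp x z, imp y w) \<in> th a"
    if "(x, y) \<in> th a" "(z, w) \<in> th a" for x y z w
  proof -
    from that have A: "x \<in> M" "y \<in> M" "z \<in> M" "w \<in> M" "Fa a (imp x y)" "Fa a (imp y x)"
        "Fa a (imp z w)" "Fa a (imp w z)" unfolding th_def by auto
    have m1: "Fa a (imp (meet x z) (meet y w))"
      using Fa_chain[of a "imp x y" "imp z w" "meet x z" "meet y z" "meet y w"] A a meet_imp meet_imp2 by simp
    have m2: "Fa a (imp (meet y w) (meet x z))"
      using Fa_chain[of a "imp y x" "imp w z" "meet y w" "meet x w" "meet x z"] A a meet_imp meet_imp2 by simp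
    have j1: "Fa a (imp (join x z) (join y w))"
      using Fa_chain[of a "imp x y" "imp z w" "join x z" "join y z" "join y w"] A a join_imp join_imp2 by simp
    have j2: "Fa a (imp (join y w) (join x z))"
      using Fa_chain[of a "imp y x" "imp w z" "join y w" "join x w" "join x z"] A a join_imp join_imp2 by simp
    have u1: "Fa a (imp (mult x z) (mult y w))"
      using Fa_chain[of a "imp x y" "imp z w" "mult x z" "mult y z" "mult y w"] A a mult_imp mult_imp2 by simp
    have u2: "Fa a (imp (mult y w) (mult x z))"
      using Fa_chain[of a "imp y x" "imp w z" "mult y w" "mult x w" "mult x z"] A a mult_imp mult_imp2 by simp
    have i1: "Fa a (imp (imp x z) (imp y w))"
      using Fa_chain[of a "imp y x" "imp z w" "imp x z" "imp y z" "imp y w"] A a imp_imp1 imp_imp2 by simp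
    have i2: "Fa a (imp (imp y w) (imp x z))"
      using Fa_chain[of a "imp x y" "imp w z" "imp y w" "imp x w" "imp x z"] A a imp_imp1 imp_imp2 by simp
    show ?thesis using m1 m2 j1 j2 u1 u2 i1 i2 A unfolding th_def by auto
  qed
  have tauc: "Fa a (imp (\<tau> x) (\<tau> y))" if X: "x \<in> M" "y \<in> M" "Fa a (imp x y)" for x y
  proof -
    obtain n where n: "le (p a n) (imp x y)" using X unfolding Fa_def by blast
    have "le (\<tau> (p a n)) (\<tau> (imp x y))" using n tau_mono X a by simp
    hence "le (\<tau> (p a n)) (imp (\<tau> x) (\<tau> y))" using tau_imp[of x y] X a le_trans[of "\<tau> (p a n)" "\<tau> (imp x y)" "imp (\<tau> x) (\<tau> y)"] by simp
    hence "le (p a n) (imp (\<tau> x) (\<tau> y))" using H[of n] X a le_trans[of "p a n" "\<tau> (p a n)" "imp (\<tau> x) (\<tau> y)"] by simp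
    thus ?thesis unfolding Fa_def by blast
  qed
  have tau: "(\<tau> x, \<tau> y) \<in> th a" if "(x, y) \<in> th a" for x y
    using that tauc unfolding th_def by auto
  show ?thesis unfolding sbl_congruence_def equiv_def using sub refl sym trans ops tau by blast
qed

lemma th_ne: "a \<in> M \<Longrightarrow> a \<noteq> one \<Longrightarrow> th a \<noteq> Id_on M"
proof -
  assume a: "a \<in> M" "a \<noteq> one"
  have "le (p a 0) (imp a one)" using a imp_to_one le_refl by simp
  moreover have "le (p a 1) (imp one a)" using a one_imp mult_one le_refl by simp
  ultimately have "Fa a (imp a one)" "Fa a (imp one a)" unfolding Fa_def by blast+
  hence "(a, one) \<in> th a" unfolding th_def using a by simp
  moreover have "(a, one) \<notin> Id_on M" using a by auto
  ultimately show ?thesis by blast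
qed

lemma th_inter: "a \<in> M \<Longrightarrow> b \<in> M \<Longrightarrow> join a b = one \<Longrightarrow> (c, d) \<in> th a \<Longrightarrow> (c, d) \<in> th b \<Longrightarrow> c = d"
proof -
  assume A: "a \<in> M" "b \<in> M" "join a b = one" "(c, d) \<in> th a" "(c, d) \<in> th b"
  have cd: "c \<in> M" "d \<in> M" using A unfolding th_def by auto
  have key: "le x y" if X: "x \<in> M" "y \<in> M" "Fa a (imp x y)" "Fa b (imp x y)" for x y
  proof -
    obtain n m where "le (p a n) (imp x y)" "le (p b m) (imp x y)" using X unfolding Fa_def by blast
    hence "le (join (p a n) (p b m)) (imp x y)" using join_lub A X by simp
    hence "le one (imp x y)" using join_pw2 A by simp
    hence "imp x y = one" using le_one[of "imp x y"] le_antisym[of "imp x y" one] X by simp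
    thus ?thesis using imp_one_iff X by simp
  qed
  have "le c d" using key cd A unfolding th_def by auto
  moreover have "le d c" using key cd A unfolding th_def by auto
  ultimately show ?thesis using le_antisym cd by simp
qed

lemma lin:
  assumes SI: "sbl_subdirectly_irreducible M meet join mult imp \<tau>"
    and a: "a \<in> M" and b: "b \<in> M" and ab: "join a b = one"
    and Ha: "\<And>n. le (p a n) (\<tau> (p a n))" and Hb: "\<And>n. le (p b n) (\<tau> (p b n))"
  shows "a = one \<or> b = one"
proof (rule ccontr)
  assume N: "\<not> (a = one \<or> b = one)"
  from SI obtain c d where cd: "c \<in> M" "d \<in> M" "c \<noteq> d"
    and all: "\<forall>\<theta>. sbl_congruence M meet join mult imp \<tau> \<theta> \<and> \<theta> \<noteq> Id_on M \<longrightarrow> (c, d) \<in> \<theta>"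
    unfolding sbl_subdirectly_irreducible_def by blast
  have na: "a \<noteq> one" and nb: "b \<noteq> one" using N by auto
  have ta: "th a \<noteq> Id_on M" by (rule th_ne[OF a na])
  have tb: "th b \<noteq> Id_on M" by (rule th_ne[OF b nb])
  have 1: "(c, d) \<in> th a" using all th_cong[OF a Ha] ta by blast
  have 2: "(c, d) \<in> th b" using all th_cong[OF b Hb] tb by blast
  have "c = d" by (rule th_inter[OF a b ab 1 2])
  thus False using cd by simp
qed

lemma lin2:
  assumes SI: "sbl_subdirectly_irreducible M meet join mult imp \<tau>"
    and x: "x \<in> M" and y: "y \<in> M"
    and Ha: "\<And>n. le (p (imp x y) n) (\<tau> (p (imp x y) n))"
    and Hb: "\<And>n. le (p (imp y x) n) (\<tau> (p (imp y x) n))"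
  shows "le x y \<or> le y x"
proof -
  have "imp x y = one \<or> imp y x = one" using lin[OF SI _ _ prelin[OF x y] Ha Hb] x y by simp
  thus ?thesis using imp_one_iff[OF x y] imp_one_iff[OF y x] by blast
qed

lemma image_lin:
  assumes SI: "sbl_subdirectly_irreducible M meet join mult imp \<tau>"
  shows "linearly_ordered_subset meet (\<tau> ` M)"
  unfolding linearly_ordered_subset_def
proof (intro ballI)
  fix x y assume "x \<in> \<tau> ` M" "y \<in> \<tau> ` M"
  then obtain u v where uv: "u \<in> M" "v \<in> M" "x = \<tau> u" "y = \<tau> v" by blast
  have fix1: "\<tau> (p a n) = p a n" if "a \<in> M" "\<tau> a = a" for a n
  proof (induction n)
    case 0 then show ?case using tau_one by simp
  next
    case (Suc n)
    have "mult a (p a n) = mult (\<tau> a) (\<tau> (p a n))" using Suc that by simp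
    then show ?case using tau_mm[of a "p a n"] that by simp
  qed
  have H: "le (p a n) (\<tau> (p a n))" if "a \<in> M" "\<tau> a = a" for a n
    using fix1[OF that] le_refl that by simp
  have "\<tau> (imp x y) = imp x y" "\<tau> (imp y x) = imp y x" using tau_ii uv by auto
  thus "le x y \<or> le y x" using lin2[OF SI] H uv by simp
qed

lemma kernel_lin:
  assumes SI: "sbl_subdirectly_irreducible M meet join mult imp \<tau>"
  shows "linearly_ordered_subset meet (state_kernel M one \<tau>)"
  unfolding linearly_ordered_subset_def
proof (intro ballI)
  fix x y assume "x \<in> state_kernel M one \<tau>" "y \<in> state_kernel M one \<tau>"
  hence xy: "x \<in> M" "y \<in> M" "\<tau> x = one" "\<tau> y = one" unfolding state_kernel_def by auto
  have ker_one: "\<tau> t = one" if "t \<in> M" "s \<in> M" "le s t" "\<tau> s = one" for s t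
  proof -
    have "le (\<tau> s) (\<tau> t)" by (rule tau_mono[OF that(2,1,3)])
    hence "le one (\<tau> t)" using that by simp
    thus ?thesis using le_one[of "\<tau> t"] le_antisym[of "\<tau> t" one] that by simp
  qed
  have ker_mult: "\<tau> (mult u v) = one" if "u \<in> M" "v \<in> M" "\<tau> u = one" "\<tau> v = one" for u v
  proof -
    have "le (mult u v) (mult u v)" using le_refl that by simp
    hence "le v (imp u (mult u v))" using resid that by simp
    hence "\<tau> (imp u (mult u v)) = one" using ker_one that by simp
    thus ?thesis using tau_mult_ax that mult_one by simp
  qed
  have pk: "\<tau> (p a n) = one" if "a \<in> M" "\<tau> a = one" for a n
    by (induction n) (use that tau_one ker_mult in auto)
  have H: "le (p a n) (\<tau> (p a n))" if "a \<in> M" "\<tau> a = one" for a n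
    using pk[OF that] le_one that by simp
  have "\<tau> (imp x y) = one" using ker_one[of "imp x y" y] le_imp xy by simp
  moreover have "\<tau> (imp y x) = one" using ker_one[of "imp y x" x] le_imp xy by simp
  ultimately show "le x y \<or> le y x" using lin2[OF SI] H xy by simp
qed


end

theorem lemma2p2:
  assumes "state_bl_algebra M meet join mult imp zero one \<tau>"
    and "sbl_subdirectly_irreducible M meet join mult imp \<tau>"
  shows "linearly_ordered_subset meet (\<tau> ` M) \<and> linearly_ordered_subset meet (state_kernel M one \<tau>)"
proof -
  interpret sbl M meet join mult imp zero one \<tau> using assms(1) by unfold_locales
  show ?thesis using image_lin[OF assms(2)] kernel_lin[OF assms(2)] by simp
qed

end
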